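(* Let $M$ be a loopless matroid and let $F$ be a flat of $M$. If either the restriction $M|F$ or the contraction $M/F$ has a non-standard rank-preserving rainbow circuit-free coloring, then so does $M$.
   Context: A coloring of the ground set is a partition into nonempty color classes; it is rainbow circuit-free if no circuit has all its elements of pairwise different colors, and rank-preserving if the number of colors equals the rank of the matroid. A coloring of a rank-$r$ matroid $N$ with color classes $S_1,\dots,S_r$ is standard if, after possibly reindexing the classes, $S_i$ is a cut of the restriction $N|(S_1\cup\dots\cup S_i)$ for every $i=1,\dots,r$, where a cut is an inclusionwise minimal subset of the ground set intersecting every basis. A flat is a set $F$ with $r_M(F+e)>r_M(F)$ for all $e\notin F$. *)

theory Defs
  imports Main "HOL-Library.Disjoint_Sets"
begin

definition matroid :: "'a set \<Rightarrow> 'a set set \<Rightarrow> bool" where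
  "matroid E I \<longleftrightarrow> finite E \<and> (\<forall>X\<in>I. X \<subseteq> E) \<and> {} \<in> I \<and>
     (\<forall>X Y. X \<in> I \<and> Y \<subseteq> X \<longrightarrow> Y \<in> I) \<and>
     (\<forall>X\<in>I. \<forall>Y\<in>I. card X < card Y \<longrightarrow> (\<exists>e\<in>Y - X. insert e X \<in> I))"

definition mrank :: "'a set set \<Rightarrow> 'a set \<Rightarrow> nat" where
  "mrank I X = Max (card ` {Y. Y \<subseteq> X \<and> Y \<in> I})"

definition basis :: "'a set set \<Rightarrow> 'a set \<Rightarrow> bool" where
  "basis I B \<longleftrightarrow> B \<in> I \<and> (\<forall>X\<in>I. B \<subseteq> X \<longrightarrow> X = B)"

definition circuit :: "'a set \<Rightarrow> 'a set set \<Rightarrow> 'a set \<Rightarrow> bool" where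
  "circuit E I C \<longleftrightarrow> C \<subseteq> E \<and> C \<notin> I \<and> (\<forall>x\<in>C. C - {x} \<in> I)"

definition loopless :: "'a set \<Rightarrow> 'a set set \<Rightarrow> bool" where
  "loopless E I \<longleftrightarrow> (\<forall>e\<in>E. {e} \<in> I)"

definition flat :: "'a set \<Rightarrow> 'a set set \<Rightarrow> 'a set \<Rightarrow> bool" where
  "flat E I F \<longleftrightarrow> F \<subseteq> E \<and> (\<forall>e\<in>E - F. mrank I (insert e F) > mrank I F)"

definition restr_indep :: "'a set set \<Rightarrow> 'a set \<Rightarrow> 'a set set" where
  "restr_indep I F = {X \<in> I. X \<subseteq> F}"

definition contr_indep :: "'a set \<Rightarrow> 'a set set \<Rightarrow> 'a set \<Rightarrow> 'a set set" where
  "contr_indep E I F = {X. X \<subseteq> E - F \<and> mrank I (X \<union> F) = card X + mrank I F}"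

definition coloring :: "'a set \<Rightarrow> 'a set set \<Rightarrow> bool" where
  "coloring E P \<longleftrightarrow> partition_on E P"

definition rainbow_circuit_free :: "'a set \<Rightarrow> 'a set set \<Rightarrow> 'a set set \<Rightarrow> bool" where
  "rainbow_circuit_free E I P \<longleftrightarrow>
     \<not> (\<exists>C. circuit E I C \<and> (\<forall>S\<in>P. card (C \<inter> S) \<le> 1))"

definition rank_preserving :: "'a set \<Rightarrow> 'a set set \<Rightarrow> 'a set set \<Rightarrow> bool" where
  "rank_preserving E I P \<longleftrightarrow> card P = mrank I E"

definition is_cut :: "'a set \<Rightarrow> 'a set set \<Rightarrow> 'a set \<Rightarrow> bool" where
  "is_cut E I X \<longleftrightarrow> X \<subseteq> E \<and> (\<forall>B. basis I B \<longrightarrow> X \<inter> B \<noteq> {}) \<and>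
     (\<forall>Y. Y \<subset> X \<longrightarrow> (\<exists>B. basis I B \<and> Y \<inter> B = {}))"

definition standard_coloring :: "'a set \<Rightarrow> 'a set set \<Rightarrow> 'a set set \<Rightarrow> bool" where
  "standard_coloring E I P \<longleftrightarrow>
     (\<exists>S. bij_betw S {1..mrank I E} P \<and>
        (\<forall>i\<in>{1..mrank I E}.
           is_cut (\<Union>(S ` {1..i})) (restr_indep I (\<Union>(S ` {1..i}))) (S i)))"

definition has_nonstandard_rp_rcf_coloring :: "'a set \<Rightarrow> 'a set set \<Rightarrow> bool" where
  "has_nonstandard_rp_rcf_coloring E I \<longleftrightarrow>
     (\<exists>P. coloring E P \<and> rainbow_circuit_free E I P \<and> rank_preserving E I P \<and>
          \<not> standard_coloring E I P)"

end

theory Submission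
  imports Defs "HOL-Library.Infinite_Set"
begin

definition rankstr :: "'a set \<Rightarrow> ('a set \<Rightarrow> nat) \<Rightarrow> bool" where
  "rankstr G \<rho> \<longleftrightarrow> finite G \<and> \<rho> {} = 0 \<and> (\<forall>e\<in>G. \<rho> {e} \<le> 1) \<and>
    (\<forall>X Y. X \<subseteq> Y \<and> Y \<subseteq> G \<longrightarrow> \<rho> X \<le> \<rho> Y) \<and>
    (\<forall>X Y. X \<subseteq> G \<and> Y \<subseteq> G \<longrightarrow> \<rho> (X \<union> Y) + \<rho> (X \<inter> Y) \<le> \<rho> X + \<rho> Y)"

definition indepset :: "'a set \<Rightarrow> ('a set \<Rightarrow> nat) \<Rightarrow> 'a set set" where
  "indepset G \<rho> = {X. X \<subseteq> G \<and> \<rho> X = card X}"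

lemma rs_fin: "rankstr G \<rho> \<Longrightarrow> finite G" by (simp add: rankstr_def)
lemma rs_empty: "rankstr G \<rho> \<Longrightarrow> \<rho> {} = 0" by (simp add: rankstr_def)
lemma rs_mono: "rankstr G \<rho> \<Longrightarrow> X \<subseteq> Y \<Longrightarrow> Y \<subseteq> G \<Longrightarrow> \<rho> X \<le> \<rho> Y" by (simp add: rankstr_def)
lemma rs_sub: "rankstr G \<rho> \<Longrightarrow> X \<subseteq> G \<Longrightarrow> Y \<subseteq> G \<Longrightarrow> \<rho> (X \<union> Y) + \<rho> (X \<inter> Y) \<le> \<rho> X + \<rho> Y"
  by (simp add: rankstr_def)
lemma rs_single: "rankstr G \<rho> \<Longrightarrow> e \<in> G \<Longrightarrow> \<rho> {e} \<le> 1" by (simp add: rankstr_def)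

lemma rs_subset: "rankstr G \<rho> \<Longrightarrow> A \<subseteq> G \<Longrightarrow> rankstr A \<rho>"
  unfolding rankstr_def by (meson finite_subset order_trans subsetD)

lemma rs_UI: assumes "rankstr G \<rho>" "X \<subseteq> G" "e \<in> G" shows "\<rho> (insert e X) \<le> \<rho> X + 1"
proof -
  have "\<rho> (X \<union> {e}) + \<rho> (X \<inter> {e}) \<le> \<rho> X + \<rho> {e}" by (rule rs_sub[OF assms(1,2)]) (use assms(3) in auto)
  then have "\<rho> (insert e X) \<le> \<rho> X + \<rho> {e}" by simp
  then show ?thesis using rs_single[OF assms(1,3)] by simp
qed

lemma rs_card: assumes "rankstr G \<rho>" "X \<subseteq> G" shows "\<rho> X \<le> card X"
proof -
  have "finite X" using assms rs_fin finite_subset by blast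
  then show ?thesis using assms(2)
  proof (induction X rule: finite_induct)
    case empty then show ?case using rs_empty[OF assms(1)] by simp
  next
    case (insert x F)
    then show ?case using rs_UI[OF assms(1), of F x] by simp
  qed
qed

lemma rs_DR: assumes "rankstr G \<rho>" "X \<subseteq> Y" "Y \<subseteq> G" "e \<in> G" "\<rho> Y < \<rho> (insert e Y)"
  shows "\<rho> X < \<rho> (insert e X)"
proof -
  have "\<rho> (insert e X \<union> Y) + \<rho> (insert e X \<inter> Y) \<le> \<rho> (insert e X) + \<rho> Y"
    using rs_sub[OF assms(1), of "insert e X" Y] assms by auto
  moreover have "insert e X \<union> Y = insert e Y" using assms by auto
  ultimately have "\<rho> (insert e Y) + \<rho> (insert e X \<inter> Y) \<le> \<rho> (insert e X) + \<rho> Y" by simp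
  moreover have "\<rho> X \<le> \<rho> (insert e X \<inter> Y)" by (rule rs_mono[OF assms(1)]) (use assms in auto)
  ultimately show ?thesis using assms(5) by linarith
qed

lemma rs_L2: assumes "rankstr G \<rho>" "X \<subseteq> Y" "Y \<subseteq> G" "Z \<subseteq> G" "\<rho> X = \<rho> Y"
  shows "\<rho> (X \<union> Z) = \<rho> (Y \<union> Z)"
proof -
  have "\<rho> ((X \<union> Z) \<union> Y) + \<rho> ((X \<union> Z) \<inter> Y) \<le> \<rho> (X \<union> Z) + \<rho> Y"
    using rs_sub[OF assms(1), of "X \<union> Z" Y] assms by auto
  moreover have "(X \<union> Z) \<union> Y = Y \<union> Z" using assms by auto
  ultimately have "\<rho> (Y \<union> Z) + \<rho> ((X \<union> Z) \<inter> Y) \<le> \<rho> (X \<union> Z) + \<rho> Y" by simp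
  moreover have "\<rho> X \<le> \<rho> ((X \<union> Z) \<inter> Y)" by (rule rs_mono[OF assms(1)]) (use assms in auto)
  moreover have "\<rho> (X \<union> Z) \<le> \<rho> (Y \<union> Z)" by (rule rs_mono[OF assms(1)]) (use assms in auto)
  ultimately show ?thesis using assms(5) by linarith
qed

lemma rs_UC: assumes "rankstr G \<rho>" "X \<subseteq> G" "Z \<subseteq> G" "\<forall>c\<in>Z. \<rho> (insert c X) = \<rho> X"
  shows "\<rho> (X \<union> Z) = \<rho> X"
proof -
  have "finite Z" using assms rs_fin finite_subset by blast
  then show ?thesis using assms(3,4)
  proof (induction Z rule: finite_induct)
    case empty then show ?case by simp
  next
    case (insert x F)
    have IH: "\<rho> (X \<union> F) = \<rho> X" using insert by auto
    have "\<not> \<rho> (X \<union> F) < \<rho> (insert x (X \<union> F))"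
    proof
      assume "\<rho> (X \<union> F) < \<rho> (insert x (X \<union> F))"
      then have "\<rho> X < \<rho> (insert x X)" using rs_DR[OF assms(1), of X "X \<union> F" x] insert assms by auto
      then show False using insert by auto
    qed
    moreover have "\<rho> (X \<union> F) \<le> \<rho> (insert x (X \<union> F))" by (rule rs_mono[OF assms(1)]) (use insert assms in auto)
    ultimately show ?case using IH by auto
  qed
qed

lemma rs_SI: assumes "rankstr G \<rho>" "X \<subseteq> G" "\<rho> X = card X" "Y \<subseteq> X" shows "\<rho> Y = card Y"
proof -
  have fX: "finite X" using assms rs_fin finite_subset by blast
  have "\<rho> (Y \<union> (X - Y)) + \<rho> (Y \<inter> (X - Y)) \<le> \<rho> Y + \<rho> (X - Y)"
    using rs_sub[OF assms(1), of Y "X - Y"] assms by auto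
  moreover have "Y \<union> (X - Y) = X" "Y \<inter> (X - Y) = {}" using assms by auto
  ultimately have "\<rho> X + \<rho> {} \<le> \<rho> Y + \<rho> (X - Y)" by simp
  moreover have "\<rho> (X - Y) \<le> card (X - Y)" by (rule rs_card[OF assms(1)]) (use assms in auto)
  moreover have "card X = card Y + card (X - Y)" using fX assms(4)
    by (metis card_Diff_subset finite_subset card_mono le_add_diff_inverse)
  moreover have "\<rho> Y \<le> card Y" by (rule rs_card[OF assms(1)]) (use assms in auto)
  ultimately show ?thesis using rs_empty[OF assms(1)] assms(3) by linarith
qed

lemma rs_BE: assumes "rankstr G \<rho>" "X \<subseteq> G"
  shows "\<exists>B. B \<subseteq> X \<and> \<rho> B = card B \<and> \<rho> B = \<rho> X"
proof -
  let ?S = "{Y. Y \<subseteq> X \<and> \<rho> Y = card Y}"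
  have fX: "finite X" using assms rs_fin finite_subset by blast
  have fS: "finite ?S" using fX by (simp add: finite_subset[of _ "Pow X"] subset_iff)
  have "{} \<in> ?S" using rs_empty[OF assms(1)] by simp
  then have ne: "card ` ?S \<noteq> {}" by blast
  obtain B where B: "B \<in> ?S" "card B = Max (card ` ?S)" using Max_in[OF finite_imageI[OF fS] ne] by auto
  have maxB: "card Y \<le> card B" if "Y \<in> ?S" for Y using B(2) fS that by simp
  have "\<forall>c\<in>X - B. \<rho> (insert c B) = \<rho> B"
  proof
    fix c assume c: "c \<in> X - B"
    have fB: "finite B" using B fX finite_subset by blast
    have "\<rho> (insert c B) \<le> \<rho> B + 1" using rs_UI[OF assms(1), of B c] B c assms by auto
    moreover have "\<rho> B \<le> \<rho> (insert c B)" by (rule rs_mono[OF assms(1)]) (use B c assms in auto)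
    moreover have "\<rho> (insert c B) \<noteq> \<rho> B + 1"
    proof
      assume "\<rho> (insert c B) = \<rho> B + 1"
      then have "insert c B \<in> ?S" using B c fB by auto
      then have "card (insert c B) \<le> card B" using maxB by blast
      then show False using c fB by simp
    qed
    ultimately show "\<rho> (insert c B) = \<rho> B" by linarith
  qed
  then have "\<rho> (B \<union> (X - B)) = \<rho> B" using rs_UC[OF assms(1), of B "X - B"] B assms by auto
  moreover have "B \<union> (X - B) = X" using B by auto
  ultimately show ?thesis using B by auto
qed

lemma rs_mrank: assumes "rankstr G \<rho>" "X \<subseteq> G" shows "mrank (indepset G \<rho>) X = \<rho> X"
proof -
  let ?S = "{Y. Y \<subseteq> X \<and> Y \<in> indepset G \<rho>}"
  have fX: "finite X" using assms rs_fin finite_subset by blast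
  have fS: "finite ?S" using fX by (simp add: finite_subset[of _ "Pow X"] subset_iff)
  obtain B where B: "B \<subseteq> X" "\<rho> B = card B" "\<rho> B = \<rho> X" using rs_BE[OF assms] by blast
  have "Max (card ` ?S) = \<rho> X"
  proof (rule Max_eqI)
    show "finite (card ` ?S)" using fS by simp
    show "y \<le> \<rho> X" if "y \<in> card ` ?S" for y
    proof -
      from that obtain Y where "Y \<in> ?S" "y = card Y" by blast
      then have Y: "Y \<subseteq> X" "Y \<subseteq> G" "\<rho> Y = card Y" "y = card Y" by (auto simp: indepset_def)
      have "\<rho> Y \<le> \<rho> X" by (rule rs_mono[OF assms(1)]) (use Y assms in auto)
      then show ?thesis using Y by simp
    qed
    show "\<rho> X \<in> card ` ?S" using B assms by (auto simp: indepset_def intro!: image_eqI[of _ _ B])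
  qed
  then show ?thesis by (simp add: mrank_def)
qed

lemma rs_L0: assumes "rankstr A \<rho>"
  shows "(\<exists>B. basis (indepset A \<rho>) B \<and> Y \<inter> B = {}) \<longleftrightarrow> \<rho> (A - Y) = \<rho> A"
proof
  assume "\<exists>B. basis (indepset A \<rho>) B \<and> Y \<inter> B = {}"
  then obtain B where B: "basis (indepset A \<rho>) B" "Y \<inter> B = {}" by blast
  have BA: "B \<subseteq> A" "\<rho> B = card B" using B by (auto simp: basis_def indepset_def)
  have fA: "finite A" using assms rs_fin by blast
  have fB: "finite B" using BA fA finite_subset by blast
  have "\<forall>c\<in>A - B. \<rho> (insert c B) = \<rho> B"
  proof
    fix c assume c: "c \<in> A - B"
    have "\<rho> (insert c B) \<le> \<rho> B + 1" using rs_UI[OF assms(1), of B c] BA c by auto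
    moreover have "\<rho> B \<le> \<rho> (insert c B)" by (rule rs_mono[OF assms(1)]) (use BA c in auto)
    moreover have "\<rho> (insert c B) \<noteq> \<rho> B + 1"
    proof
      assume "\<rho> (insert c B) = \<rho> B + 1"
      then have "insert c B \<in> indepset A \<rho>" using BA c fB by (auto simp: indepset_def)
      then have "insert c B = B" using B(1) unfolding basis_def by blast
      then show False using c by auto
    qed
    ultimately show "\<rho> (insert c B) = \<rho> B" by linarith
  qed
  then have "\<rho> (B \<union> (A - B)) = \<rho> B" using rs_UC[OF assms(1), of B "A - B"] BA by auto
  moreover have "B \<union> (A - B) = A" using BA by auto
  ultimately have "\<rho> A = \<rho> B" by simp
  moreover have "\<rho> B \<le> \<rho> (A - Y)" by (rule rs_mono[OF assms(1)]) (use BA B(2) in auto)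
  moreover have "\<rho> (A - Y) \<le> \<rho> A" by (rule rs_mono[OF assms(1)]) auto
  ultimately show "\<rho> (A - Y) = \<rho> A" by linarith
next
  assume h: "\<rho> (A - Y) = \<rho> A"
  obtain B where B: "B \<subseteq> A - Y" "\<rho> B = card B" "\<rho> B = \<rho> (A - Y)" using rs_BE[OF assms, of "A - Y"] by blast
  have fA: "finite A" using assms rs_fin by blast
  have "basis (indepset A \<rho>) B" unfolding basis_def
  proof (intro conjI ballI impI)
    show "B \<in> indepset A \<rho>" using B by (auto simp: indepset_def)
    fix X assume X: "X \<in> indepset A \<rho>" "B \<subseteq> X"
    have "\<rho> X \<le> \<rho> A" by (rule rs_mono[OF assms(1)]) (use X in \<open>auto simp: indepset_def\<close>)
    then have "card X \<le> card B" using X B h by (auto simp: indepset_def)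
    moreover have "finite X" using X fA finite_subset by (auto simp: indepset_def)
    ultimately show "X = B" using X(2) card_subset_eq by (metis card_mono le_antisym)
  qed
  then show "\<exists>B. basis (indepset A \<rho>) B \<and> Y \<inter> B = {}" using B by blast
qed

definition cutR :: "'a set \<Rightarrow> ('a set \<Rightarrow> nat) \<Rightarrow> 'a set \<Rightarrow> bool" where
  "cutR A \<rho> S \<longleftrightarrow> S \<subseteq> A \<and> \<rho> (A - S) \<noteq> \<rho> A \<and> (\<forall>Y. Y \<subset> S \<longrightarrow> \<rho> (A - Y) = \<rho> A)"

definition stdR :: "'a set \<Rightarrow> ('a set \<Rightarrow> nat) \<Rightarrow> 'a set set \<Rightarrow> bool" where
  "stdR G \<rho> P \<longleftrightarrow> (\<exists>S. bij_betw S {1..\<rho> G} P \<and>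
     (\<forall>i\<in>{1..\<rho> G}. cutR (\<Union>(S ` {1..i})) \<rho> (S i)))"

lemma rs_cut: assumes "rankstr A \<rho>"
  shows "is_cut A (indepset A \<rho>) S \<longleftrightarrow> cutR A \<rho> S"
proof -
  have L: "\<And>Y. (\<rho> (A - Y) = \<rho> A) = (\<exists>B. basis (indepset A \<rho>) B \<and> Y \<inter> B = {})"
    using rs_L0[OF assms] by simp
  show ?thesis unfolding is_cut_def cutR_def L by auto
qed

lemma restr_indepset: "A \<subseteq> G \<Longrightarrow> restr_indep (indepset G \<rho>) A = indepset A \<rho>"
  by (auto simp: restr_indep_def indepset_def)

lemma rs_std: assumes "rankstr G \<rho>" "\<Union>P \<subseteq> G"
  shows "standard_coloring G (indepset G \<rho>) P \<longleftrightarrow> stdR G \<rho> P"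
proof -
  have m: "mrank (indepset G \<rho>) G = \<rho> G" using rs_mrank[OF assms(1)] by simp
  have "is_cut (\<Union>(S ` {1..i})) (restr_indep (indepset G \<rho>) (\<Union>(S ` {1..i}))) (S i)
        \<longleftrightarrow> cutR (\<Union>(S ` {1..i})) \<rho> (S i)"
    if "bij_betw S {1..\<rho> G} P" "i \<in> {1..\<rho> G}" for S i
  proof -
    have "S ` {1..i} \<subseteq> P" using that by (auto simp: bij_betw_def)
    then have sub: "\<Union>(S ` {1..i}) \<subseteq> G" using assms(2) by blast
    show ?thesis using restr_indepset[OF sub] rs_cut[OF rs_subset[OF assms(1) sub]] by simp
  qed
  then show ?thesis unfolding standard_coloring_def stdR_def m
    by (intro iff_exI) (metis (no_types, lifting))
qed

lemma mat_fin: "matroid E I \<Longrightarrow> finite E" by (simp add: matroid_def)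
lemma mat_sub: "matroid E I \<Longrightarrow> X \<in> I \<Longrightarrow> X \<subseteq> E" by (auto simp: matroid_def)
lemma mat_empty: "matroid E I \<Longrightarrow> {} \<in> I" by (simp add: matroid_def)
lemma mat_down: "matroid E I \<Longrightarrow> X \<in> I \<Longrightarrow> Y \<subseteq> X \<Longrightarrow> Y \<in> I" by (auto simp: matroid_def)
lemma mat_aug: "matroid E I \<Longrightarrow> X \<in> I \<Longrightarrow> Y \<in> I \<Longrightarrow> card X < card Y \<Longrightarrow> \<exists>e\<in>Y - X. insert e X \<in> I"
  by (auto simp: matroid_def)

lemma mat_fam_fin: assumes "matroid E I" "X \<subseteq> E" shows "finite {Y. Y \<subseteq> X \<and> Y \<in> I}"
proof -
  have "finite X" using assms mat_fin finite_subset by blast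
  then show ?thesis by (simp add: finite_subset[of _ "Pow X"] subset_iff)
qed

lemma mrank_ge: assumes "matroid E I" "X \<subseteq> E" "Y \<subseteq> X" "Y \<in> I" shows "card Y \<le> mrank I X"
  unfolding mrank_def using mat_fam_fin[OF assms(1,2)] assms by (auto intro!: Max_ge)

lemma mrank_attained: assumes "matroid E I" "X \<subseteq> E"
  shows "\<exists>Y. Y \<subseteq> X \<and> Y \<in> I \<and> card Y = mrank I X"
proof -
  have "{} \<in> {Y. Y \<subseteq> X \<and> Y \<in> I}" using mat_empty[OF assms(1)] by simp
  then have "mrank I X \<in> card ` {Y. Y \<subseteq> X \<and> Y \<in> I}"
    unfolding mrank_def using mat_fam_fin[OF assms] by (intro Max_in) auto
  then show ?thesis by auto
qed

lemma mrank_le: assumes "matroid E I" "X \<subseteq> E" shows "mrank I X \<le> card X"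
proof -
  obtain Y where "Y \<subseteq> X" "Y \<in> I" "card Y = mrank I X" using mrank_attained[OF assms] by blast
  moreover have "finite X" using assms mat_fin finite_subset by blast
  ultimately show ?thesis by (metis card_mono)
qed

lemma mrank_ext: assumes "matroid E I" "J \<in> I" "J \<subseteq> X" "X \<subseteq> E"
  shows "\<exists>J'. J \<subseteq> J' \<and> J' \<subseteq> X \<and> J' \<in> I \<and> card J' = mrank I X"
proof -
  let ?S = "{Y. J \<subseteq> Y \<and> Y \<subseteq> X \<and> Y \<in> I}"
  have fX: "finite X" using assms mat_fin finite_subset by blast
  have fS: "finite ?S" using fX by (simp add: finite_subset[of _ "Pow X"] subset_iff)
  have "J \<in> ?S" using assms by auto
  then have ne: "card ` ?S \<noteq> {}" by blast
  obtain B where B: "B \<in> ?S" "card B = Max (card ` ?S)" using Max_in[OF finite_imageI[OF fS] ne] by auto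
  have maxB: "card Y \<le> card B" if "Y \<in> ?S" for Y using B(2) fS that by simp
  obtain Y0 where Y0: "Y0 \<subseteq> X" "Y0 \<in> I" "card Y0 = mrank I X" using mrank_attained[OF assms(1,4)] by blast
  have "\<not> card B < card Y0"
  proof
    assume "card B < card Y0"
    then obtain e where e: "e \<in> Y0 - B" "insert e B \<in> I" using mat_aug[OF assms(1)] B Y0 by blast
    have fB: "finite B" using B fX finite_subset by blast
    have "insert e B \<in> ?S" using e B Y0 by auto
    then have "card (insert e B) \<le> card B" using maxB by blast
    then show False using e fB by simp
  qed
  moreover have "card B \<le> mrank I X" by (rule mrank_ge[OF assms(1,4)]) (use B in auto)
  ultimately show ?thesis using B Y0 by (intro exI[of _ B]) auto
qed

lemma mat_rankstr: assumes "matroid E I" shows "rankstr E (mrank I)"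
  unfolding rankstr_def
proof (intro conjI allI impI ballI)
  show "finite E" using mat_fin[OF assms] .
  show "mrank I {} = 0" using mrank_le[OF assms, of "{}"] by simp
  show "mrank I {e} \<le> 1" if "e \<in> E" for e using mrank_le[OF assms, of "{e}"] that by simp
  show "mrank I X \<le> mrank I Y" if XY: "X \<subseteq> Y \<and> Y \<subseteq> E" for X Y
  proof -
    have XE: "X \<subseteq> E" using XY by blast
    obtain Z where Z: "Z \<subseteq> X" "Z \<in> I" "card Z = mrank I X" using mrank_attained[OF assms XE] by blast
    have "card Z \<le> mrank I Y" using XY Z by (intro mrank_ge[OF assms]) auto
    then show ?thesis using Z(3) by simp
  qed
  show "mrank I (X \<union> Y) + mrank I (X \<inter> Y) \<le> mrank I X + mrank I Y" if XY: "X \<subseteq> E \<and> Y \<subseteq> E" for X Y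
  proof -
    have XE: "X \<subseteq> E" "Y \<subseteq> E" "X \<inter> Y \<subseteq> E" "X \<union> Y \<subseteq> E" using XY by blast+
    obtain B0 where B0: "B0 \<subseteq> X \<inter> Y" "B0 \<in> I" "card B0 = mrank I (X \<inter> Y)"
      using mrank_attained[OF assms XE(3)] by blast
    have B0u: "B0 \<subseteq> X \<union> Y" using B0(1) by blast
    obtain B1 where B1: "B0 \<subseteq> B1" "B1 \<subseteq> X \<union> Y" "B1 \<in> I" "card B1 = mrank I (X \<union> Y)"
      using mrank_ext[OF assms B0(2) B0u XE(4)] by blast
    have fE: "finite E" using mat_fin[OF assms] .
    have fB1: "finite B1" by (rule finite_subset[OF _ fE]) (use B1(2) XE(4) in blast)
    have i1: "B1 \<inter> X \<in> I" by (rule mat_down[OF assms B1(3)]) blast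
    have i2: "B1 \<inter> Y \<in> I" by (rule mat_down[OF assms B1(3)]) blast
    have c1: "card (B1 \<inter> X) \<le> mrank I X" by (rule mrank_ge[OF assms XE(1) _ i1]) blast
    have c2: "card (B1 \<inter> Y) \<le> mrank I Y" by (rule mrank_ge[OF assms XE(2) _ i2]) blast
    have c3: "card (B1 \<inter> X) + card (B1 \<inter> Y) = card ((B1 \<inter> X) \<union> (B1 \<inter> Y)) + card ((B1 \<inter> X) \<inter> (B1 \<inter> Y))"
      by (rule card_Un_Int) (use fB1 in auto)
    have e: "(B1 \<inter> X) \<union> (B1 \<inter> Y) = B1" using B1(2) by blast
    have c4: "card B0 \<le> card ((B1 \<inter> X) \<inter> (B1 \<inter> Y))" 
      by (rule card_mono) (use fB1 B0(1) B1(1) in auto)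
    show ?thesis using c1 c2 c3[unfolded e] c4 B0(3) B1(4) by linarith
  qed
qed

lemma mat_indepset: assumes "matroid E I" shows "I = indepset E (mrank I)"
proof (intro set_eqI iffI)
  fix X assume X: "X \<in> I"
  have XE: "X \<subseteq> E" using mat_sub[OF assms X] .
  have "card X \<le> mrank I X" using mrank_ge[OF assms XE _ X] by simp
  then show "X \<in> indepset E (mrank I)" using mrank_le[OF assms XE] XE by (auto simp: indepset_def)
next
  fix X assume "X \<in> indepset E (mrank I)"
  then have X: "X \<subseteq> E" "mrank I X = card X" by (auto simp: indepset_def)
  obtain Y where Y: "Y \<subseteq> X" "Y \<in> I" "card Y = mrank I X" using mrank_attained[OF assms X(1)] by blast
  have "finite X" using X assms mat_fin finite_subset by blast
  then have "Y = X" using Y X card_subset_eq by metis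
  then show "X \<in> I" using Y by simp
qed

definition crank :: "('a set \<Rightarrow> nat) \<Rightarrow> 'a set \<Rightarrow> 'a set \<Rightarrow> nat" where
  "crank r F X = r (X \<union> F) - r F"

lemma contr_rankstr: assumes "rankstr E r" "F \<subseteq> E" shows "rankstr (E - F) (crank r F)"
  unfolding rankstr_def crank_def
proof (intro conjI allI impI ballI)
  show "finite (E - F)" using rs_fin[OF assms(1)] by simp
  show "r ({} \<union> F) - r F = 0" by simp
  show "r ({e} \<union> F) - r F \<le> 1" if "e \<in> E - F" for e
    using rs_UI[OF assms(1), of F e] that assms by simp
  show "r (X \<union> F) - r F \<le> r (Y \<union> F) - r F" if "X \<subseteq> Y \<and> Y \<subseteq> E - F" for X Y
  proof -
    have "r (X \<union> F) \<le> r (Y \<union> F)" by (rule rs_mono[OF assms(1)]) (use that assms in auto)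
    then show ?thesis by simp
  qed
  show "r (X \<union> Y \<union> F) - r F + (r (X \<inter> Y \<union> F) - r F) \<le> r (X \<union> F) - r F + (r (Y \<union> F) - r F)"
    if "X \<subseteq> E - F \<and> Y \<subseteq> E - F" for X Y
  proof -
    have "r ((X \<union> F) \<union> (Y \<union> F)) + r ((X \<union> F) \<inter> (Y \<union> F)) \<le> r (X \<union> F) + r (Y \<union> F)"
      by (rule rs_sub[OF assms(1)]) (use that assms in auto)
    moreover have "(X \<union> F) \<union> (Y \<union> F) = X \<union> Y \<union> F" "(X \<union> F) \<inter> (Y \<union> F) = X \<inter> Y \<union> F" by auto
    ultimately have "r (X \<union> Y \<union> F) + r (X \<inter> Y \<union> F) \<le> r (X \<union> F) + r (Y \<union> F)" by simp
    moreover have "r F \<le> r (X \<union> Y \<union> F)" by (rule rs_mono[OF assms(1)]) (use that assms in auto)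
    moreover have "r F \<le> r (X \<inter> Y \<union> F)" by (rule rs_mono[OF assms(1)]) (use that assms in auto)
    moreover have "r F \<le> r (X \<union> F)" by (rule rs_mono[OF assms(1)]) (use that assms in auto)
    moreover have "r F \<le> r (Y \<union> F)" by (rule rs_mono[OF assms(1)]) (use that assms in auto)
    ultimately show ?thesis by linarith
  qed
qed

lemma contr_indepset: assumes "matroid E I" "F \<subseteq> E"
  shows "contr_indep E I F = indepset (E - F) (crank (mrank I) F)"
proof (rule set_eqI)
  fix X
  have "X \<subseteq> E - F \<Longrightarrow> mrank I F \<le> mrank I (X \<union> F)"
    by (rule rs_mono[OF mat_rankstr[OF assms(1)]]) (use assms(2) in auto)
  then show "X \<in> contr_indep E I F \<longleftrightarrow> X \<in> indepset (E - F) (crank (mrank I) F)"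
    unfolding contr_indep_def indepset_def crank_def by auto
qed

lemma restr_indepset2: assumes "matroid E I" "F \<subseteq> E"
  shows "restr_indep I F = indepset F (mrank I)"
  using restr_indepset[OF assms(2), of "mrank I"] mat_indepset[OF assms(1)] by simp

lemma rs_exists_col: assumes rs: "rankstr G \<rho>" and ll: "\<forall>e\<in>G. \<rho> {e} \<noteq> 0"
  shows "\<exists>Q. partition_on G Q \<and> card Q = \<rho> G \<and> rainbow_circuit_free G (indepset G \<rho>) Q"
proof -
  define n where "n = \<rho> G"
  have fG: "finite G" using rs_fin[OF rs] .
  obtain B where B: "B \<subseteq> G" "\<rho> B = card B" "\<rho> B = \<rho> G" using rs_BE[OF rs, of G] by blast
  have fB: "finite B" by (rule finite_subset[OF B(1) fG])
  have cB: "card B = n" using B n_def by simp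
  obtain b where b: "bij_betw b {1..n} B" using ex_bij_betw_nat_finite_1[OF fB] cB by auto
  define Bi where "Bi i = b ` {1..i}" for i
  have Bi_sub: "i \<le> n \<Longrightarrow> Bi i \<subseteq> B" for i using b unfolding Bi_def bij_betw_def by auto
  have Bi_n: "Bi n = B" using b unfolding Bi_def bij_betw_def by auto
  have Bi_0: "Bi 0 = {}" unfolding Bi_def by simp
  have injb: "inj_on b {1..n}" using b by (simp add: bij_betw_def)
  define P where "P e i \<longleftrightarrow> \<rho> (insert e (Bi i)) = \<rho> (Bi i)" for e i
  define f where "f e = (LEAST i. P e i)" for e
  have Pn: "P e n" if "e \<in> G" for e
  proof -
    have "\<rho> (insert e B) \<le> \<rho> G" by (rule rs_mono[OF rs]) (use B that in auto)
    moreover have "\<rho> B \<le> \<rho> (insert e B)" by (rule rs_mono[OF rs]) (use B that in auto)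
    ultimately show ?thesis unfolding P_def Bi_n using B by simp
  qed
  have fle: "f e \<le> n" if "e \<in> G" for e unfolding f_def by (rule Least_le) (rule Pn[OF that])
  have Pf: "P e (f e)" if "e \<in> G" for e unfolding f_def by (rule LeastI) (rule Pn[OF that])
  have fne0: "f e \<noteq> 0" if "e \<in> G" for e
  proof
    assume "f e = 0"
    then have "P e 0" using Pf[OF that] by simp
    then show False using ll that rs_empty[OF rs] unfolding P_def Bi_0 by simp
  qed
  have Pmono: "P c j" if "c \<in> G" "f c \<le> j" "j \<le> n" for c j
  proof -
    have s: "Bi (f c) \<subseteq> Bi j" unfolding Bi_def using that by auto
    have sj: "Bi j \<subseteq> G" using Bi_sub[OF that(3)] B by blast
    have "\<not> \<rho> (Bi j) < \<rho> (insert c (Bi j))"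
    proof
      assume "\<rho> (Bi j) < \<rho> (insert c (Bi j))"
      then have "\<rho> (Bi (f c)) < \<rho> (insert c (Bi (f c)))" by (rule rs_DR[OF rs s sj that(1)])
      then show False using Pf[OF that(1)] unfolding P_def by simp
    qed
    moreover have "\<rho> (Bi j) \<le> \<rho> (insert c (Bi j))" by (rule rs_mono[OF rs]) (use sj that in auto)
    ultimately show ?thesis unfolding P_def by simp
  qed
  have bB: "b i \<in> B" if "i \<in> {1..n}" for i using bij_betw_apply[OF b that] .
  have bG: "b i \<in> G" if "i \<in> {1..n}" for i using bB[OF that] B(1) by blast
  have fb: "f (b i) = i" if i: "i \<in> {1..n}" for i
    unfolding f_def
  proof (rule Least_equality)
    have "b i \<in> Bi i" using i by (simp add: Bi_def)
    then show "P (b i) i" unfolding P_def by (simp add: insert_absorb)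
    show "i \<le> y" if "P (b i) y" for y
    proof (rule ccontr)
      assume "\<not> i \<le> y"
      then have y: "y < i" by simp
      have nin: "b i \<notin> Bi y"
      proof
        assume "b i \<in> Bi y"
        then obtain j where j: "j \<in> {1..y}" "b i = b j" unfolding Bi_def by auto
        have "i = j" by (rule inj_onD[OF injb j(2)]) (use i j y in auto)
        then show False using j y by simp
      qed
      have sub: "insert (b i) (Bi y) \<subseteq> B" using Bi_sub[of y] y i bB[OF i] by simp
      have "\<rho> (insert (b i) (Bi y)) = card (insert (b i) (Bi y))"
        by (rule rs_SI[OF rs B(1) B(2) sub])
      moreover have "\<rho> (Bi y) = card (Bi y)"
        by (rule rs_SI[OF rs B(1) B(2)]) (use Bi_sub y i in auto)
      moreover have "finite (Bi y)" unfolding Bi_def by simp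
      ultimately show False using that nin unfolding P_def by simp
    qed
  qed
  define Cls where "Cls i = {e\<in>G. f e = i}" for i
  define Q where "Q = Cls ` {1..n}"
  have bCls: "b i \<in> Cls i" if "i \<in> {1..n}" for i using fb[OF that] bG[OF that] by (simp add: Cls_def)
  have injC: "inj_on Cls {1..n}"
  proof (rule inj_onI)
    fix i j assume "i \<in> {1..n}" "j \<in> {1..n}" "Cls i = Cls j"
    then have "b i \<in> Cls j" using bCls by metis
    then have "f (b i) = j" by (simp add: Cls_def)
    then show "i = j" using fb \<open>i \<in> {1..n}\<close> by simp
  qed
  have part: "partition_on G Q"
  proof (rule partition_onI)
    show "\<Union>Q = G"
    proof
      show "\<Union>Q \<subseteq> G" unfolding Q_def Cls_def by auto
      show "G \<subseteq> \<Union>Q"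
      proof
        fix e assume e: "e \<in> G"
        have "f e \<in> {1..n}" using fle[OF e] fne0[OF e] by auto
        moreover have "e \<in> Cls (f e)" using e by (simp add: Cls_def)
        ultimately show "e \<in> \<Union>Q" unfolding Q_def by blast
      qed
    qed
    show "\<And>p q. p \<in> Q \<Longrightarrow> q \<in> Q \<Longrightarrow> p \<noteq> q \<Longrightarrow> disjnt p q"
      unfolding Q_def Cls_def disjnt_def by auto
    show "{} \<notin> Q" unfolding Q_def using bCls by blast
  qed
  have cardQ: "card Q = \<rho> G" unfolding Q_def n_def[symmetric] using card_image[OF injC] by simp
  have rcf: "rainbow_circuit_free G (indepset G \<rho>) Q"
    unfolding rainbow_circuit_free_def
  proof
    assume "\<exists>C. circuit G (indepset G \<rho>) C \<and> (\<forall>S\<in>Q. card (C \<inter> S) \<le> 1)"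
    then obtain C where C: "C \<subseteq> G" "C \<notin> indepset G \<rho>" "\<forall>x\<in>C. C - {x} \<in> indepset G \<rho>"
      and rb: "\<forall>S\<in>Q. card (C \<inter> S) \<le> 1" unfolding circuit_def by blast
    have fC: "finite C" by (rule finite_subset[OF C(1) fG])
    have Cne: "C \<noteq> {}" using C(2) rs_empty[OF rs] by (auto simp: indepset_def)
    define i where "i = Max (f ` C)"
    have "i \<in> f ` C" unfolding i_def using fC Cne by (intro Max_in) auto
    then obtain e where e: "e \<in> C" "f e = i" by auto
    have eG: "e \<in> G" using e C(1) by blast
    have i1: "i \<ge> 1" "i \<le> n" using fne0[OF eG] fle[OF eG] e by auto
    have others: "P c (i - 1)" if c: "c \<in> C - {e}" for c
    proof -
      have cG: "c \<in> G" using c C(1) by blast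
      have "f c \<le> i" unfolding i_def using fC c by (intro Max_ge) auto
      moreover have "f c \<noteq> i"
      proof
        assume fci: "f c = i"
        have "{c, e} \<subseteq> C \<inter> Cls i" using c e cG eG fci by (auto simp: Cls_def)
        then have "card {c, e} \<le> card (C \<inter> Cls i)" using fC by (intro card_mono) auto
        moreover have "Cls i \<in> Q" unfolding Q_def using i1 by auto
        moreover have "card {c, e} = 2" using c by auto
        ultimately show False using rb by fastforce
      qed
      ultimately show ?thesis using Pmono[OF cG, of "i - 1"] i1 by simp
    qed
    let ?X = "Bi (i - 1)"
    have "?X \<subseteq> B" by (rule Bi_sub) (use i1 in simp)
    then have XG: "?X \<subseteq> G" using B(1) by blast
    have "\<rho> (?X \<union> (C - {e})) = \<rho> ?X"
      by (rule rs_UC[OF rs XG]) (use others C(1) in \<open>auto simp: P_def\<close>)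
    moreover have "\<rho> (C - {e}) = \<rho> C"
    proof -
      have "\<rho> (C - {e}) = card (C - {e})" using C(3) e by (auto simp: indepset_def)
      moreover have "\<rho> C \<le> card C" by (rule rs_card[OF rs C(1)])
      moreover have "\<rho> C \<noteq> card C" using C(1,2) by (auto simp: indepset_def)
      moreover have "\<rho> (C - {e}) \<le> \<rho> C" by (rule rs_mono[OF rs]) (use C in auto)
      moreover have "card (C - {e}) = card C - 1" using e fC by simp
      ultimately show ?thesis using Cne fC by (simp add: card_gt_0_iff)
    qed
    then have "\<rho> ((C - {e}) \<union> ?X) = \<rho> (C \<union> ?X)" by (intro rs_L2[OF rs _ C(1) XG]) auto
    moreover have "\<rho> (insert e ?X) \<le> \<rho> (C \<union> ?X)" by (rule rs_mono[OF rs]) (use e C XG in auto)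
    moreover have "\<rho> ?X \<le> \<rho> (insert e ?X)" by (rule rs_mono[OF rs]) (use eG XG in auto)
    moreover have "(C - {e}) \<union> ?X = ?X \<union> (C - {e})" by auto
    ultimately have "P e (i - 1)" unfolding P_def by simp
    then have "f e \<le> i - 1" unfolding f_def by (rule Least_le)
    then show False using e i1 by simp
  qed
  show ?thesis using part cardQ rcf by blast
qed

lemma part_union: assumes "partition_on F PF" "partition_on (E - F) Q" "F \<subseteq> E"
  shows "partition_on E (PF \<union> Q)" "PF \<inter> Q = {}"
proof -
  have u1: "\<Union>PF = F" and u2: "\<Union>Q = E - F" using assms by (auto simp: partition_on_def)
  have n1: "{} \<notin> PF" and n2: "{} \<notin> Q" using assms by (auto simp: partition_on_def)
  show "PF \<inter> Q = {}"
  proof (rule ccontr)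
    assume "PF \<inter> Q \<noteq> {}"
    then obtain p where p: "p \<in> PF" "p \<in> Q" by blast
    then have "p \<subseteq> F" "p \<subseteq> E - F" using u1 u2 by blast+
    then have "p = {}" by blast
    then show False using p n1 by simp
  qed
  show "partition_on E (PF \<union> Q)"
  proof (rule partition_onI)
    show "\<Union>(PF \<union> Q) = E" using u1 u2 assms(3) by blast
    show "{} \<notin> PF \<union> Q" using n1 n2 by blast
    fix p q assume pq: "p \<in> PF \<union> Q" "q \<in> PF \<union> Q" "p \<noteq> q"
    have d1: "disjoint PF" and d2: "disjoint Q" using assms by (auto simp: partition_on_def)
    show "disjnt p q"
    proof (cases "p \<in> PF")
      case True
      show ?thesis
      proof (cases "q \<in> PF")
        case True
        then show ?thesis using d1 \<open>p \<in> PF\<close> pq(3) by (auto simp: disjoint_def disjnt_def)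
      next
        case False
        then have "q \<in> Q" using pq by blast
        then have "q \<subseteq> E - F" "p \<subseteq> F" using u1 u2 \<open>p \<in> PF\<close> by blast+
        then show ?thesis by (auto simp: disjnt_def)
      qed
    next
      case False
      then have pQ: "p \<in> Q" using pq by blast
      show ?thesis
      proof (cases "q \<in> PF")
        case True
        then have "p \<subseteq> E - F" "q \<subseteq> F" using u1 u2 pQ by blast+
        then show ?thesis by (auto simp: disjnt_def)
      next
        case False
        then have "q \<in> Q" using pq by blast
        then show ?thesis using d2 pQ pq(3) by (auto simp: disjoint_def disjnt_def)
      qed
    qed
  qed
qed

lemma const_lemma: fixes d :: "nat \<Rightarrow> int"
  assumes "\<And>m. m < n \<Longrightarrow> d m \<le> d (Suc m)" "d n \<le> d 0" "m \<le> n"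
  shows "d m = d 0"
proof -
  have mono: "d a \<le> d b" if "a \<le> b" "b \<le> n" for a b
    using that
  proof (induction b)
    case 0 then show ?case by simp
  next
    case (Suc b)
    show ?case
    proof (cases "a = Suc b")
      case True then show ?thesis by simp
    next
      case False
      then have "a \<le> b" using Suc by simp
      then have "d a \<le> d b" using Suc by simp
      also have "d b \<le> d (Suc b)" using assms(1) Suc by simp
      finally show ?thesis .
    qed
  qed
  have "d 0 \<le> d m" using mono[of 0 m] assms by simp
  moreover have "d m \<le> d n" using mono[of m n] assms by simp
  ultimately show ?thesis using assms(2) by simp
qed

lemma card_Int_Suc: "card (J \<inter> {1..Suc m}) = card (J \<inter> {1..m}) + (if Suc m \<in> J then 1 else 0)"
proof -
  have e: "J \<inter> {1..Suc m} = (if Suc m \<in> J then insert (Suc m) (J \<inter> {1..m}) else J \<inter> {1..m})"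
    by (auto simp: atLeastAtMostSuc_conv)
  show ?thesis
  proof (cases "Suc m \<in> J")
    case True
    have "Suc m \<notin> J \<inter> {1..m}" by simp
    then show ?thesis using True e by simp
  next
    case False
    then show ?thesis using e by simp
  qed
qed

lemma count_up: fixes g :: "nat \<Rightarrow> nat"
  assumes "\<And>i. i \<in> {1..n} \<Longrightarrow> i \<in> J \<Longrightarrow> g (i - 1) < g i"
    "\<And>i. i \<in> {1..n} \<Longrightarrow> g (i - 1) \<le> g i"
    "g n \<le> g 0 + card (J \<inter> {1..n})" "m \<le> n"
  shows "g m = g 0 + card (J \<inter> {1..m})"
proof -
  define d where "d m = int (g m) - int (card (J \<inter> {1..m}))" for m
  have "d m = d 0"
  proof (rule const_lemma[of n d])
    fix m assume m: "m < n"
    have s: "Suc m \<in> {1..n}" using m by simp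
    show "d m \<le> d (Suc m)"
      using assms(1)[OF s] assms(2)[OF s] unfolding d_def card_Int_Suc by auto
  next
    show "d n \<le> d 0" using assms(3) unfolding d_def by simp
  qed (use assms in auto)
  then show ?thesis unfolding d_def by simp
qed

lemma count_down: fixes g :: "nat \<Rightarrow> nat"
  assumes "\<And>i. i \<in> {1..n} \<Longrightarrow> i \<in> J \<Longrightarrow> g i \<le> g (i - 1) + 1"
    "\<And>i. i \<in> {1..n} \<Longrightarrow> i \<notin> J \<Longrightarrow> g i \<le> g (i - 1)"
    "g 0 + card (J \<inter> {1..n}) \<le> g n" "m \<le> n"
  shows "g m = g 0 + card (J \<inter> {1..m})"
proof -
  define d where "d m = int (card (J \<inter> {1..m})) - int (g m)" for m
  have "d m = d 0"
  proof (rule const_lemma[of n d])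
    fix m assume m: "m < n"
    have s: "Suc m \<in> {1..n}" using m by simp
    show "d m \<le> d (Suc m)"
    proof (cases "Suc m \<in> J")
      case True
      then show ?thesis using assms(1)[OF s] unfolding d_def card_Int_Suc by auto
    next
      case False
      then show ?thesis using assms(2)[OF s] unfolding d_def card_Int_Suc by auto
    qed
  next
    show "d n \<le> d 0" using assms(3) unfolding d_def by simp
  qed (use assms in auto)
  then show ?thesis unfolding d_def by simp
qed

lemma sub_enum: fixes n :: nat and S :: "nat \<Rightarrow> 'a set" assumes S: "bij_betw S {1..n} P" and P1: "P1 \<subseteq> P"
  shows "\<exists>T \<sigma>. bij_betw T {1..card P1} P1 \<and> (\<forall>j\<in>{1..card P1}. \<sigma> j \<in> {i\<in>{1..n}. S i \<in> P1} \<and>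
     T j = S (\<sigma> j) \<and> T ` {1..j} = S ` {i\<in>{i\<in>{1..n}. S i \<in> P1}. i \<le> \<sigma> j})"
proof -
  define J where "J = {i\<in>{1..n}. S i \<in> P1}"
  have fJ: "finite J" unfolding J_def by (rule finite_subset[of _ "{1..n}"]) auto
  obtain h where h: "bij_betw h {..<card J} J" "strict_mono_on {..<card J} h"
    using ex_bij_betw_strict_mono_card[OF fJ] by blast
  have SJ: "bij_betw S J P1"
    unfolding bij_betw_def
  proof
    have "inj_on S {1..n}" using S by (simp add: bij_betw_def)
    moreover have "J \<subseteq> {1..n}" unfolding J_def by blast
    ultimately show "inj_on S J" by (rule inj_on_subset)
    show "S ` J = P1"
    proof
      show "S ` J \<subseteq> P1" unfolding J_def by auto
      show "P1 \<subseteq> S ` J"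
      proof
        fix p assume p: "p \<in> P1"
        then have "p \<in> S ` {1..n}" using P1 S by (auto simp: bij_betw_def)
        then obtain i where "i \<in> {1..n}" "p = S i" by blast
        then show "p \<in> S ` J" using p unfolding J_def by blast
      qed
    qed
  qed
  have cJ: "card J = card P1" using bij_betw_same_card[OF SJ] .
  define k where "k = card J"
  define \<sigma> where "\<sigma> j = h (j - 1)" for j
  have hJ: "h m \<in> J" if "m < k" for m using bij_betw_apply[OF h(1)] that k_def by simp
  have hmono: "h a < h b" if "a < b" "b < k" for a b
  proof -
    have "a \<in> {..<card J}" "b \<in> {..<card J}" using that k_def by auto
    then show ?thesis using strict_mono_onD[OF h(2)] that(1) by blast
  qed
  have hle: "a \<le> b" if "h a \<le> h b" "a < k" "b < k" for a b
  proof (rule ccontr)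
    assume "\<not> a \<le> b"
    then have "b < a" by simp
    then have "h b < h a" using hmono that(2) by blast
    then show False using that(1) by simp
  qed
  have inj_h: "inj_on h {..<k}" using h(1) k_def by (simp add: bij_betw_def)
  have Jimg: "J = h ` {..<k}" using h(1) k_def by (simp add: bij_betw_def)
  have sig_bij: "bij_betw \<sigma> {1..k} J"
    unfolding bij_betw_def
  proof
    show "inj_on \<sigma> {1..k}"
    proof (rule inj_onI)
      fix a b assume ab: "a \<in> {1..k}" "b \<in> {1..k}" "\<sigma> a = \<sigma> b"
      have m: "a - 1 \<in> {..<k}" "b - 1 \<in> {..<k}" using ab(1,2) by auto
      have "h (a - 1) = h (b - 1)" using ab(3) unfolding \<sigma>_def .
      then have "a - 1 = b - 1" using inj_onD[OF inj_h _ m] by blast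
      moreover have "1 \<le> a" "1 \<le> b" using ab(1,2) by auto
      ultimately show "a = b" by arith
    qed
    show "\<sigma> ` {1..k} = J"
    proof
      show "\<sigma> ` {1..k} \<subseteq> J"
      proof
        fix x assume "x \<in> \<sigma> ` {1..k}"
        then obtain a where a: "a \<in> {1..k}" "x = h (a - 1)" unfolding \<sigma>_def by blast
        have "a - 1 < k" using a(1) by auto
        then show "x \<in> J" using hJ a(2) by blast
      qed
      show "J \<subseteq> \<sigma> ` {1..k}"
      proof
        fix x assume "x \<in> J"
        then obtain m where m: "m < k" "x = h m" using Jimg by blast
        have "x = \<sigma> (Suc m)" using m(2) unfolding \<sigma>_def by simp
        moreover have "Suc m \<in> {1..k}" using m(1) by simp
        ultimately show "x \<in> \<sigma> ` {1..k}" by blast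
      qed
    qed
  qed
  have sig_img: "\<sigma> ` {1..j} = {i\<in>J. i \<le> \<sigma> j}" if j: "j \<in> {1..k}" for j
  proof
    show "\<sigma> ` {1..j} \<subseteq> {i\<in>J. i \<le> \<sigma> j}"
    proof
      fix x assume "x \<in> \<sigma> ` {1..j}"
      then obtain j' where j': "j' \<in> {1..j}" "x = \<sigma> j'" by blast
      have "j' - 1 < k" using j' j by auto
      then have "x \<in> J" using hJ j'(2) unfolding \<sigma>_def by blast
      moreover have "x \<le> \<sigma> j"
      proof (cases "j' = j")
        case True then show ?thesis using j' by simp
      next
        case False
        then have "j' - 1 < j - 1" using j' by auto
        moreover have "j - 1 < k" using j by auto
        ultimately have "h (j' - 1) < h (j - 1)" using hmono by blast
        then show ?thesis using j' unfolding \<sigma>_def by simp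
      qed
      ultimately show "x \<in> {i\<in>J. i \<le> \<sigma> j}" by blast
    qed
    show "{i\<in>J. i \<le> \<sigma> j} \<subseteq> \<sigma> ` {1..j}"
    proof
      fix x assume x: "x \<in> {i\<in>J. i \<le> \<sigma> j}"
      then obtain m where m: "m < k" "x = h m" using Jimg by blast
      have jk: "j - 1 < k" using j by auto
      have "h m \<le> h (j - 1)" using x m unfolding \<sigma>_def by simp
      then have "m \<le> j - 1" using hle m(1) jk by blast
      then have "Suc m \<in> {1..j}" using j by auto
      moreover have "x = \<sigma> (Suc m)" using m unfolding \<sigma>_def by simp
      ultimately show "x \<in> \<sigma> ` {1..j}" by blast
    qed
  qed
  define T where "T j = S (\<sigma> j)" for j
  have A1: "bij_betw T {1..k} P1" unfolding T_def using bij_betw_trans[OF sig_bij SJ] by (simp add: comp_def)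
  have A2: "\<forall>j\<in>{1..k}. \<sigma> j \<in> J \<and> T j = S (\<sigma> j) \<and> T ` {1..j} = S ` {i\<in>J. i \<le> \<sigma> j}"
  proof
    fix j assume j: "j \<in> {1..k}"
    have "\<sigma> j \<in> J" using bij_betw_apply[OF sig_bij j] .
    moreover have "T ` {1..j} = S ` (\<sigma> ` {1..j})" unfolding T_def by auto
    ultimately show "\<sigma> j \<in> J \<and> T j = S (\<sigma> j) \<and> T ` {1..j} = S ` {i\<in>J. i \<le> \<sigma> j}"
      using sig_img[OF j] unfolding T_def by simp
  qed
  have k_eq: "k = card P1" using k_def cJ by simp
  have A1': "bij_betw T {1..card P1} P1" using A1 k_eq by simp
  have A2': "\<forall>j\<in>{1..card P1}. \<sigma> j \<in> {i\<in>{1..n}. S i \<in> P1} \<and> T j = S (\<sigma> j) \<and>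
      T ` {1..j} = S ` {i\<in>{i\<in>{1..n}. S i \<in> P1}. i \<le> \<sigma> j}" using A2 unfolding k_eq J_def .
  show ?thesis
    apply (rule exI[of _ T])
    apply (rule exI[of _ \<sigma>])
    apply (rule conjI)
     apply (rule A1')
    apply (rule A2')
    done
qed

locale stdctx =
  fixes E :: "'a set" and r :: "'a set \<Rightarrow> nat" and P :: "'a set set" and S :: "nat \<Rightarrow> 'a set" and n :: nat
  assumes rs: "rankstr E r" and part: "partition_on E P" and bij: "bij_betw S {1..n} P"
    and cuts: "\<forall>i\<in>{1..n}. cutR (\<Union>(S ` {1..i})) r (S i)"
begin

definition A :: "nat \<Rightarrow> 'a set" where "A m = \<Union>(S ` {1..m})"

lemma S_in: "i \<in> {1..n} \<Longrightarrow> S i \<in> P" using bij_betw_apply[OF bij] .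
lemma S_ne: assumes "i \<in> {1..n}" shows "S i \<noteq> {}"
proof -
  have "{} \<notin> P" using part by (simp add: partition_on_def)
  then show ?thesis using S_in[OF assms] by metis
qed
lemma S_sub: assumes "i \<in> {1..n}" shows "S i \<subseteq> E"
proof -
  have "\<Union>P = E" using part by (simp add: partition_on_def)
  then show ?thesis using S_in[OF assms] by blast
qed
lemma S_disj: assumes "i \<in> {1..n}" "i' \<in> {1..n}" "i \<noteq> i'" shows "S i \<inter> S i' = {}"
proof -
  have inj: "inj_on S {1..n}" using bij by (simp add: bij_betw_def)
  have "S i \<noteq> S i'" using inj_onD[OF inj _ assms(1,2)] assms(3) by blast
  moreover have "disjoint P" using part by (simp add: partition_on_def)
  ultimately show ?thesis using S_in[OF assms(1)] S_in[OF assms(2)] by (auto simp: disjoint_def)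
qed

lemma A_step: "i \<in> {1..n} \<Longrightarrow> A i = A (i - 1) \<union> S i"
proof -
  assume i: "i \<in> {1..n}"
  then have "{1..i} = insert i {1..i - 1}" by auto
  then show ?thesis unfolding A_def by auto
qed

lemma A_disj: assumes i: "i \<in> {1..n}" shows "A (i - 1) \<inter> S i = {}"
proof -
  have "S i' \<inter> S i = {}" if "i' \<in> {1..i - 1}" for i'
  proof -
    have "i' \<in> {1..n}" "i' \<noteq> i" using that i by auto
    then show ?thesis using S_disj[of i' i] i by blast
  qed
  then show ?thesis unfolding A_def by blast
qed

lemma A_mono: "m \<le> m' \<Longrightarrow> A m \<subseteq> A m'" unfolding A_def by (intro Union_mono image_mono) auto

lemma A_n: "A n = E"
proof -
  have "S ` {1..n} = P" using bij by (simp add: bij_betw_def)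
  then show ?thesis unfolding A_def using part by (simp add: partition_on_def)
qed

lemma A_sub: "m \<le> n \<Longrightarrow> A m \<subseteq> E" using A_mono A_n by blast

lemma A0: "A 0 = {}" unfolding A_def by simp

lemma elem: assumes i: "i \<in> {1..n}" and e: "e \<in> S i"
  shows "r (A (i - 1)) < r (insert e (A (i - 1)))" "r (insert e (A (i - 1))) = r (A i)"
proof -
  have c: "cutR (A i) r (S i)" using cuts i unfolding A_def by blast
  have st: "A i = A (i - 1) \<union> S i" by (rule A_step[OF i])
  have dj: "A (i - 1) \<inter> S i = {}" by (rule A_disj[OF i])
  have "S i - {e} \<subset> S i" using e by blast
  then have "r (A i - (S i - {e})) = r (A i)" using c unfolding cutR_def by blast
  moreover have "A i - (S i - {e}) = insert e (A (i - 1))" using st dj e by blast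
  ultimately show eq: "r (insert e (A (i - 1))) = r (A i)" by simp
  have "A i - S i = A (i - 1)" using st dj by blast
  then have ne: "r (A (i - 1)) \<noteq> r (A i)" using c unfolding cutR_def by simp
  have "r (A (i - 1)) \<le> r (A i)" by (rule rs_mono[OF rs]) (use A_mono A_sub i in auto)
  then show "r (A (i - 1)) < r (insert e (A (i - 1)))" using ne eq by simp
qed


lemma transfer1:
  assumes FE: "F \<subseteq> E" and pF: "partition_on F PF" and pQ: "partition_on (E - F) Q"
    and PU: "P = PF \<union> Q" and cPF: "card PF = r F"
  shows "stdR F r PF"
proof -
  have uF: "\<Union>PF = F" using pF by (simp add: partition_on_def)
  have uQ: "\<Union>Q = E - F" using pQ by (simp add: partition_on_def)
  define J where "J = {i\<in>{1..n}. S i \<in> PF}"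
  have inF: "S i \<subseteq> F" if "i \<in> J" for i using that uF unfolding J_def by blast
  have outF: "S i \<inter> F = {}" if "i \<in> {1..n}" "i \<notin> J" for i
  proof -
    have "S i \<in> Q" using S_in[OF that(1)] that PU unfolding J_def by blast
    then show ?thesis using uQ by blast
  qed
  have AF: "A m \<inter> F = \<Union>(S ` {i\<in>J. i \<le> m})" if m: "m \<le> n" for m
  proof
    show "A m \<inter> F \<subseteq> \<Union>(S ` {i\<in>J. i \<le> m})"
    proof
      fix x assume x: "x \<in> A m \<inter> F"
      then obtain i where i: "i \<in> {1..m}" "x \<in> S i" unfolding A_def by blast
      have i': "i \<in> {1..n}" using i m by auto
      have "i \<in> J" using outF[OF i'] i x by blast
      then show "x \<in> \<Union>(S ` {i\<in>J. i \<le> m})" using i by auto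
    qed
    show "\<Union>(S ` {i\<in>J. i \<le> m}) \<subseteq> A m \<inter> F"
    proof
      fix x assume "x \<in> \<Union>(S ` {i\<in>J. i \<le> m})"
      then obtain i where i: "i \<in> J" "i \<le> m" "x \<in> S i" by blast
      have "x \<in> F" using inF[OF i(1)] i(3) by blast
      moreover have "i \<in> {1..m}" using i(1,2) unfolding J_def by auto
      ultimately show "x \<in> A m \<inter> F" using i(3) unfolding A_def by blast
    qed
  qed
  define g where "g m = r (A m \<inter> F)" for m
  have cardJ: "card J = card PF"
  proof -
    have "inj_on S {1..n}" using bij by (simp add: bij_betw_def)
    moreover have "J \<subseteq> {1..n}" unfolding J_def by blast
    ultimately have "inj_on S J" by (rule inj_on_subset)
    moreover have "S ` J = PF"
    proof
      show "S ` J \<subseteq> PF" unfolding J_def by blast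
      show "PF \<subseteq> S ` J"
      proof
        fix p assume p: "p \<in> PF"
        have "S ` {1..n} = P" using bij by (simp add: bij_betw_def)
        then obtain i where "i \<in> {1..n}" "p = S i" using p PU by blast
        then show "p \<in> S ` J" using p unfolding J_def by blast
      qed
    qed
    ultimately show ?thesis using card_image by metis
  qed
  have Jn: "J \<inter> {1..n} = J" unfolding J_def by blast
  have gcount: "g m = g 0 + card (J \<inter> {1..m})" if "m \<le> n" for m
  proof (rule count_up[of n J g m])
    fix i assume i: "i \<in> {1..n}" "i \<in> J"
    obtain e where e: "e \<in> S i" using S_ne[OF i(1)] by blast
    have eF: "e \<in> F" using inF[OF i(2)] e by blast
    have eE: "e \<in> E" using eF FE by blast
    have sub1: "A (i - 1) \<subseteq> E" by (rule A_sub) (use i(1) in auto)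
    have "r (A (i - 1) \<inter> F) < r (insert e (A (i - 1) \<inter> F))"
      by (rule rs_DR[OF rs _ sub1 eE elem(1)[OF i(1) e]]) blast
    also have "r (insert e (A (i - 1) \<inter> F)) \<le> r (A i \<inter> F)"
    proof (rule rs_mono[OF rs])
      show "insert e (A (i - 1) \<inter> F) \<subseteq> A i \<inter> F" using A_step[OF i(1)] e eF by blast
      show "A i \<inter> F \<subseteq> E" using FE by blast
    qed
    finally show "g (i - 1) < g i" unfolding g_def .
  next
    fix i assume i: "i \<in> {1..n}"
    show "g (i - 1) \<le> g i" unfolding g_def
      by (rule rs_mono[OF rs]) (use A_mono[of "i - 1" i] FE in auto)
  next
    have "g n = r F" unfolding g_def A_n using FE by (simp add: Int_absorb1)
    moreover have "g 0 = 0" unfolding g_def A0 using rs_empty[OF rs] by simp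
    ultimately show "g n \<le> g 0 + card (J \<inter> {1..n})" using cardJ cPF Jn by simp
  qed (use that in simp)
  have g0: "g 0 = 0" unfolding g_def A0 using rs_empty[OF rs] by simp
  obtain T \<sigma> where T: "bij_betw T {1..card PF} PF"
    and Tp: "\<forall>j\<in>{1..card PF}. \<sigma> j \<in> J \<and> T j = S (\<sigma> j) \<and> T ` {1..j} = S ` {i\<in>J. i \<le> \<sigma> j}"
    using sub_enum[OF bij, of PF] PU unfolding J_def by blast
  have "\<forall>j\<in>{1..r F}. cutR (\<Union>(T ` {1..j})) r (T j)"
  proof
    fix j assume j: "j \<in> {1..r F}"
    then have j': "j \<in> {1..card PF}" using cPF by simp
    define i where "i = \<sigma> j"
    have iJ: "i \<in> J" using Tp j' unfolding i_def by blast
    have i: "i \<in> {1..n}" using iJ unfolding J_def by blast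
    have Tj: "T j = S i" using Tp j' unfolding i_def by blast
    have "T ` {1..j} = S ` {i'\<in>J. i' \<le> i}" using Tp j' unfolding i_def by blast
    then have U: "\<Union>(T ` {1..j}) = A i \<inter> F" using AF[of i] i by simp
    have st: "A i = A (i - 1) \<union> S i" by (rule A_step[OF i])
    have dj: "A (i - 1) \<inter> S i = {}" by (rule A_disj[OF i])
    have SF: "S i \<subseteq> F" by (rule inF[OF iJ])
    have gi: "g i = g (i - 1) + 1"
    proof -
      have "g i = card (J \<inter> {1..i})" using gcount[of i] g0 i by simp
      moreover have "i - 1 \<le> n" using i by auto
      then have "g (i - 1) = card (J \<inter> {1..i - 1})" using gcount[of "i - 1"] g0 by simp
      moreover have "i = Suc (i - 1)" using i by simp
      ultimately show ?thesis using card_Int_Suc[of J "i - 1"] iJ by simp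
    qed
    have "cutR (A i \<inter> F) r (S i)" unfolding cutR_def
    proof (intro conjI allI impI)
      show "S i \<subseteq> A i \<inter> F" using st SF by blast
      have "A i \<inter> F - S i = A (i - 1) \<inter> F" using st dj by blast
      then show "r (A i \<inter> F - S i) \<noteq> r (A i \<inter> F)" using gi unfolding g_def by simp
      fix Y assume Y: "Y \<subset> S i"
      then obtain e where e: "e \<in> S i" "e \<notin> Y" by blast
      have eF: "e \<in> F" using SF e by blast
      have eE: "e \<in> E" using eF FE by blast
      have sub1: "A (i - 1) \<subseteq> E" by (rule A_sub) (use i in auto)
      have "r (A (i - 1) \<inter> F) < r (insert e (A (i - 1) \<inter> F))"
        by (rule rs_DR[OF rs _ sub1 eE elem(1)[OF i e(1)]]) blast
      then have lo: "g i \<le> r (insert e (A (i - 1) \<inter> F))" using gi unfolding g_def by simp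
      have "r (insert e (A (i - 1) \<inter> F)) \<le> r (A i \<inter> F - Y)"
      proof (rule rs_mono[OF rs])
        show "insert e (A (i - 1) \<inter> F) \<subseteq> A i \<inter> F - Y" using st dj e eF Y by blast
        show "A i \<inter> F - Y \<subseteq> E" using FE by blast
      qed
      moreover have "r (A i \<inter> F - Y) \<le> r (A i \<inter> F)" by (rule rs_mono[OF rs]) (use FE in auto)
      ultimately show "r (A i \<inter> F - Y) = r (A i \<inter> F)" using lo unfolding g_def by simp
    qed
    then show "cutR (\<Union>(T ` {1..j})) r (T j)" using U Tj by simp
  qed
  moreover have "bij_betw T {1..r F} PF" using T cPF by simp
  ultimately show ?thesis unfolding stdR_def by blast
qed


lemma transfer2:
  assumes FE: "F \<subseteq> E" and pF: "partition_on F PF" and pQ: "partition_on (E - F) Q"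
    and PU: "P = PF \<union> Q" and cQ: "card Q = r E - r F"
  shows "stdR (E - F) (crank r F) Q"
proof -
  have uF: "\<Union>PF = F" using pF by (simp add: partition_on_def)
  have uQ: "\<Union>Q = E - F" using pQ by (simp add: partition_on_def)
  define J where "J = {i\<in>{1..n}. S i \<in> Q}"
  have inQ: "S i \<subseteq> E - F" if "i \<in> J" for i using that uQ unfolding J_def by blast
  have inF: "S i \<subseteq> F" if "i \<in> {1..n}" "i \<notin> J" for i
  proof -
    have "S i \<in> PF" using S_in[OF that(1)] that PU unfolding J_def by blast
    then show ?thesis using uF by blast
  qed
  have AQ: "A m - F = \<Union>(S ` {i\<in>J. i \<le> m})" if m: "m \<le> n" for m
  proof
    show "A m - F \<subseteq> \<Union>(S ` {i\<in>J. i \<le> m})"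
    proof
      fix x assume x: "x \<in> A m - F"
      then obtain i where i: "i \<in> {1..m}" "x \<in> S i" unfolding A_def by blast
      have i': "i \<in> {1..n}" using i m by auto
      have "i \<in> J" using inF[OF i'] i x by blast
      then show "x \<in> \<Union>(S ` {i\<in>J. i \<le> m})" using i by auto
    qed
    show "\<Union>(S ` {i\<in>J. i \<le> m}) \<subseteq> A m - F"
    proof
      fix x assume "x \<in> \<Union>(S ` {i\<in>J. i \<le> m})"
      then obtain i where i: "i \<in> J" "i \<le> m" "x \<in> S i" by blast
      have "x \<notin> F" using inQ[OF i(1)] i(3) by blast
      moreover have "i \<in> {1..m}" using i(1,2) unfolding J_def by auto
      ultimately show "x \<in> A m - F" using i(3) unfolding A_def by blast
    qed
  qed
  define h where "h m = r (A m \<union> F)" for m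
  have cardJ: "card J = card Q"
  proof -
    have "inj_on S {1..n}" using bij by (simp add: bij_betw_def)
    moreover have "J \<subseteq> {1..n}" unfolding J_def by blast
    ultimately have "inj_on S J" by (rule inj_on_subset)
    moreover have "S ` J = Q"
    proof
      show "S ` J \<subseteq> Q" unfolding J_def by blast
      show "Q \<subseteq> S ` J"
      proof
        fix p assume p: "p \<in> Q"
        have "S ` {1..n} = P" using bij by (simp add: bij_betw_def)
        then obtain i where "i \<in> {1..n}" "p = S i" using p PU by blast
        then show "p \<in> S ` J" using p unfolding J_def by blast
      qed
    qed
    ultimately show ?thesis using card_image by metis
  qed
  have Jn: "J \<inter> {1..n} = J" unfolding J_def by blast
  have h0: "h 0 = r F" unfolding h_def A0 by simp
  have rFE: "r F \<le> r E" by (rule rs_mono[OF rs FE]) simp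
  have hstep: "h i = r (insert e (A (i - 1)) \<union> F)" if i: "i \<in> {1..n}" and e: "e \<in> S i" for i e
  proof -
    have s1: "insert e (A (i - 1)) \<subseteq> A i" using A_step[OF i] e by blast
    have s2: "A i \<subseteq> E" by (rule A_sub) (use i in auto)
    have "r (insert e (A (i - 1)) \<union> F) = r (A i \<union> F)"
      by (rule rs_L2[OF rs s1 s2 FE elem(2)[OF i e]])
    then show ?thesis unfolding h_def by simp
  qed
  have hcount: "h m = h 0 + card (J \<inter> {1..m})" if "m \<le> n" for m
  proof (rule count_down[of n J h m])
    fix i assume i: "i \<in> {1..n}" "i \<in> J"
    obtain e where e: "e \<in> S i" using S_ne[OF i(1)] by blast
    have eE: "e \<in> E" using S_sub[OF i(1)] e by blast
    have "A (i - 1) \<subseteq> E" by (rule A_sub) (use i(1) in auto)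
    then have sub1: "A (i - 1) \<union> F \<subseteq> E" using FE by blast
    have "h i = r (insert e (A (i - 1) \<union> F))" using hstep[OF i(1) e] by simp
    also have "\<dots> \<le> r (A (i - 1) \<union> F) + 1" by (rule rs_UI[OF rs sub1 eE])
    finally show "h i \<le> h (i - 1) + 1" unfolding h_def .
  next
    fix i assume i: "i \<in> {1..n}" "i \<notin> J"
    have "A i \<union> F = A (i - 1) \<union> F" using A_step[OF i(1)] inF[OF i] by blast
    then show "h i \<le> h (i - 1)" unfolding h_def by simp
  next
    have "h n = r E" unfolding h_def A_n using FE by (simp add: Un_absorb2)
    then show "h 0 + card (J \<inter> {1..n}) \<le> h n" using h0 cardJ cQ Jn rFE by simp
  qed (use that in simp)
  obtain T \<sigma> where T: "bij_betw T {1..card Q} Q"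
    and Tp: "\<forall>j\<in>{1..card Q}. \<sigma> j \<in> J \<and> T j = S (\<sigma> j) \<and> T ` {1..j} = S ` {i\<in>J. i \<le> \<sigma> j}"
    using sub_enum[OF bij, of Q] PU unfolding J_def by blast
  have rho: "crank r F (E - F) = card Q" unfolding crank_def using FE cQ by (simp add: Un_absorb2)
  have "\<forall>j\<in>{1..crank r F (E - F)}. cutR (\<Union>(T ` {1..j})) (crank r F) (T j)"
  proof
    fix j assume j: "j \<in> {1..crank r F (E - F)}"
    then have j': "j \<in> {1..card Q}" using rho by simp
    define i where "i = \<sigma> j"
    have iJ: "i \<in> J" using Tp j' unfolding i_def by blast
    have i: "i \<in> {1..n}" using iJ unfolding J_def by blast
    have Tj: "T j = S i" using Tp j' unfolding i_def by blast
    have "T ` {1..j} = S ` {i'\<in>J. i' \<le> i}" using Tp j' unfolding i_def by blast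
    then have U: "\<Union>(T ` {1..j}) = A i - F" using AQ[of i] i by simp
    have st: "A i = A (i - 1) \<union> S i" by (rule A_step[OF i])
    have dj: "A (i - 1) \<inter> S i = {}" by (rule A_disj[OF i])
    have SQ: "S i \<subseteq> E - F" by (rule inQ[OF iJ])
    have hi: "h i = h (i - 1) + 1"
    proof -
      have "h i = r F + card (J \<inter> {1..i})" using hcount[of i] h0 i by simp
      moreover have "i - 1 \<le> n" using i by auto
      then have "h (i - 1) = r F + card (J \<inter> {1..i - 1})" using hcount[of "i - 1"] h0 by simp
      moreover have "i = Suc (i - 1)" using i by simp
      ultimately show ?thesis using card_Int_Suc[of J "i - 1"] iJ by simp
    qed
    have hF: "r F \<le> h m" if "m \<le> n" for m unfolding h_def
      by (rule rs_mono[OF rs]) (use FE A_sub[OF that] in auto)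
    have "cutR (A i - F) (crank r F) (S i)" unfolding cutR_def crank_def
    proof (intro conjI allI impI)
      show "S i \<subseteq> A i - F" using st SQ by blast
      have "(A i - F - S i) \<union> F = A (i - 1) \<union> F" using st dj by blast
      moreover have "(A i - F) \<union> F = A i \<union> F" by blast
      moreover have "r F \<le> h (i - 1)" by (rule hF) (use i in auto)
      ultimately show "r (A i - F - S i \<union> F) - r F \<noteq> r (A i - F \<union> F) - r F"
        using hi unfolding h_def by simp
      fix Y assume Y: "Y \<subset> S i"
      then obtain e where e: "e \<in> S i" "e \<notin> Y" by blast
      have eq1: "r (insert e (A (i - 1) - F) \<union> F) = h i"
      proof -
        have "insert e (A (i - 1) - F) \<union> F = insert e (A (i - 1)) \<union> F" by blast
        then show ?thesis using hstep[OF i e(1)] by simp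
      qed
      have "r (insert e (A (i - 1) - F) \<union> F) \<le> r (A i - F - Y \<union> F)"
      proof (rule rs_mono[OF rs])
        show "insert e (A (i - 1) - F) \<union> F \<subseteq> A i - F - Y \<union> F" using st dj e SQ Y by blast
        show "A i - F - Y \<union> F \<subseteq> E" using FE A_sub[of i] i by auto
      qed
      moreover have "r (A i - F - Y \<union> F) \<le> r (A i \<union> F)"
        by (rule rs_mono[OF rs]) (use FE A_sub[of i] i in auto)
      moreover have "(A i - F) \<union> F = A i \<union> F" by blast
      ultimately show "r (A i - F - Y \<union> F) - r F = r (A i - F \<union> F) - r F"
        using eq1 unfolding h_def by simp
    qed
    then show "cutR (\<Union>(T ` {1..j})) (crank r F) (T j)" using U Tj by simp
  qed
  moreover have "bij_betw T {1..crank r F (E - F)} Q" using T rho by simp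
  ultimately show ?thesis unfolding stdR_def by blast
qed

end

lemma hn_iff: assumes rs: "rankstr G \<rho>"
  shows "has_nonstandard_rp_rcf_coloring G (indepset G \<rho>) \<longleftrightarrow>
    (\<exists>P. partition_on G P \<and> rainbow_circuit_free G (indepset G \<rho>) P \<and> card P = \<rho> G \<and> \<not> stdR G \<rho> P)"
proof -
  have m: "mrank (indepset G \<rho>) G = \<rho> G" using rs_mrank[OF rs] by simp
  have "standard_coloring G (indepset G \<rho>) P \<longleftrightarrow> stdR G \<rho> P" if "partition_on G P" for P
    using rs_std[OF rs] that by (simp add: partition_on_def)
  then show ?thesis unfolding has_nonstandard_rp_rcf_coloring_def coloring_def rank_preserving_def m
    by (metis (no_types, lifting))
qed

lemma min_dep: assumes "finite D" "D \<notin> Ind"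
  shows "\<exists>C. C \<subseteq> D \<and> C \<notin> Ind \<and> (\<forall>x\<in>C. C - {x} \<in> Ind)"
proof -
  let ?M = "{C. C \<subseteq> D \<and> C \<notin> Ind}"
  have fM: "finite ?M" using assms(1) by (simp add: finite_subset[of _ "Pow D"] subset_iff)
  have "D \<in> ?M" using assms by blast
  then have ne: "card ` ?M \<noteq> {}" by blast
  obtain C where C: "C \<in> ?M" "card C = Min (card ` ?M)" using Min_in[OF finite_imageI[OF fM] ne] by auto
  have minC: "card C \<le> card Y" if "Y \<in> ?M" for Y using C(2) fM that by simp
  have fC: "finite C" using C assms(1) finite_subset by blast
  have "\<forall>x\<in>C. C - {x} \<in> Ind"
  proof
    fix x assume x: "x \<in> C"
    show "C - {x} \<in> Ind"
    proof (rule ccontr)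
      assume "C - {x} \<notin> Ind"
      then have "C - {x} \<in> ?M" using C by blast
      then have "card C \<le> card (C - {x})" using minC by blast
      moreover have "card C > 0" using x fC card_gt_0_iff by blast
      ultimately show False using x fC by simp
    qed
  qed
  then show ?thesis using C by blast
qed

lemma rcf_comb:
  assumes rs: "rankstr E r" and FE: "F \<subseteq> E" and pF: "partition_on F PF" and pQ: "partition_on (E - F) Q"
    and rF: "rainbow_circuit_free F (indepset F r) PF"
    and rQ: "rainbow_circuit_free (E - F) (indepset (E - F) (crank r F)) Q"
  shows "rainbow_circuit_free E (indepset E r) (PF \<union> Q)"
  unfolding rainbow_circuit_free_def
proof
  assume "\<exists>C. circuit E (indepset E r) C \<and> (\<forall>S\<in>PF \<union> Q. card (C \<inter> S) \<le> 1)"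
  then obtain C where C: "C \<subseteq> E" "C \<notin> indepset E r" "\<forall>x\<in>C. C - {x} \<in> indepset E r"
    and rb: "\<forall>S\<in>PF \<union> Q. card (C \<inter> S) \<le> 1" unfolding circuit_def by blast
  have fE: "finite E" using rs_fin[OF rs] .
  have fC: "finite C" by (rule finite_subset[OF C(1) fE])
  have rC: "r C \<noteq> card C" using C(1,2) by (simp add: indepset_def)
  show False
  proof (cases "C \<subseteq> F")
    case True
    have "circuit F (indepset F r) C" unfolding circuit_def
      using True rC C(3) by (auto simp: indepset_def)
    moreover have "\<forall>S\<in>PF. card (C \<inter> S) \<le> 1" using rb by blast
    ultimately show False using rF unfolding rainbow_circuit_free_def by blast
  next
    case False
    then obtain x where x: "x \<in> C" "x \<notin> F" by blast
    let ?D = "C - F"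
    have sub: "r (C \<union> F) + r (C \<inter> F) \<le> r C + r F" using rs_sub[OF rs C(1) FE] .
    have rCle: "r C \<le> card C" by (rule rs_card[OF rs C(1)])
    have ind: "r (C - {x}) = card (C - {x})" using C(3) x(1) by (simp add: indepset_def)
    have rCF: "r (C \<inter> F) = card (C \<inter> F)"
      by (rule rs_SI[OF rs _ ind]) (use C(1) x in auto)
    have cc: "card C = card (C \<inter> F) + card ?D"
      using fC by (metis Diff_Diff_Int card_Diff_subset_Int Int_lower1 card_mono le_add_diff_inverse
          finite_Int Diff_subset Int_commute)
    have e: "?D \<union> F = C \<union> F" by blast
    have mF: "r F \<le> r (C \<union> F)" by (rule rs_mono[OF rs]) (use C(1) FE in auto)
    have "r (C \<union> F) < card ?D + r F" using sub rCle rC rCF cc by linarith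
    then have "crank r F ?D \<noteq> card ?D" unfolding crank_def e using mF by linarith
    then have Dn: "?D \<notin> indepset (E - F) (crank r F)" by (simp add: indepset_def)
    have fD: "finite ?D" using fC by simp
    obtain C' where C': "C' \<subseteq> ?D" "C' \<notin> indepset (E - F) (crank r F)"
      "\<forall>y\<in>C'. C' - {y} \<in> indepset (E - F) (crank r F)" using min_dep[OF fD Dn] by blast
    have "circuit (E - F) (indepset (E - F) (crank r F)) C'" unfolding circuit_def
      using C' C(1) by blast
    moreover have "\<forall>S\<in>Q. card (C' \<inter> S) \<le> 1"
    proof
      fix S assume S: "S \<in> Q"
      have "card (C' \<inter> S) \<le> card (C \<inter> S)" by (rule card_mono) (use fC C' in auto)
      moreover have "card (C \<inter> S) \<le> 1" using rb S by blast
      ultimately show "card (C' \<inter> S) \<le> 1" by linarith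
    qed
    ultimately show False using rQ unfolding rainbow_circuit_free_def by blast
  qed
qed

theorem lemma15:
  fixes E F :: "'a set" and I :: "'a set set"
  assumes "matroid E I" and "loopless E I" and "flat E I F"
    and "has_nonstandard_rp_rcf_coloring F (restr_indep I F) \<or>
         has_nonstandard_rp_rcf_coloring (E - F) (contr_indep E I F)"
  shows "has_nonstandard_rp_rcf_coloring E I"
proof -
  define r where "r = mrank I"
  have M: "matroid E I" by fact
  have rs: "rankstr E r" unfolding r_def by (rule mat_rankstr[OF M])
  have FE: "F \<subseteq> E" using assms(3) by (simp add: flat_def)
  have IE: "I = indepset E r" unfolding r_def by (rule mat_indepset[OF M])
  have IF: "restr_indep I F = indepset F r" unfolding r_def by (rule restr_indepset2[OF M FE])
  have IC: "contr_indep E I F = indepset (E - F) (crank r F)" unfolding r_def by (rule contr_indepset[OF M FE])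
  have rsF: "rankstr F r" by (rule rs_subset[OF rs FE])
  have rsC: "rankstr (E - F) (crank r F)" by (rule contr_rankstr[OF rs FE])
  have fE: "finite E" using rs_fin[OF rs] .
  have rFE: "r F \<le> r E" by (rule rs_mono[OF rs FE]) simp
  have rhoC: "crank r F (E - F) = r E - r F" unfolding crank_def using FE by (simp add: Un_absorb2)
  have llF: "\<forall>e\<in>F. r {e} \<noteq> 0"
  proof
    fix e assume e: "e \<in> F"
    have "{e} \<in> I" using assms(2) e FE by (auto simp: loopless_def)
    then have "r {e} = 1" using IE by (simp add: indepset_def)
    then show "r {e} \<noteq> 0" by simp
  qed
  have llC: "\<forall>e\<in>E - F. crank r F {e} \<noteq> 0"
  proof
    fix e assume e: "e \<in> E - F"
    have "r (insert e F) > r F" using assms(3) e unfolding flat_def r_def by blast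
    then show "crank r F {e} \<noteq> 0" unfolding crank_def by simp
  qed
  have cardU: "card (PF \<union> Q) = card PF + card Q" if "partition_on F PF" "partition_on (E - F) Q" for PF Q
  proof -
    have "finite PF" by (rule finite_elements[OF _ that(1)]) (use fE FE finite_subset in blast)
    moreover have "finite Q" by (rule finite_elements[OF _ that(2)]) (use fE in simp)
    moreover have "PF \<inter> Q = {}" using part_union(2)[OF that FE] .
    ultimately show ?thesis by (rule card_Un_disjoint)
  qed
  have goal: "\<exists>P. partition_on E P \<and> rainbow_circuit_free E (indepset E r) P \<and> card P = r E \<and> \<not> stdR E r P"
    using assms(4)
  proof
    assume "has_nonstandard_rp_rcf_coloring F (restr_indep I F)"
    then obtain PF where PF: "partition_on F PF" "rainbow_circuit_free F (indepset F r) PF"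
      "card PF = r F" "\<not> stdR F r PF" unfolding IF hn_iff[OF rsF] by blast
    obtain Q where Q: "partition_on (E - F) Q" "card Q = crank r F (E - F)"
      "rainbow_circuit_free (E - F) (indepset (E - F) (crank r F)) Q"
      using rs_exists_col[OF rsC llC] by blast
    have p: "partition_on E (PF \<union> Q)" using part_union(1)[OF PF(1) Q(1) FE] .
    have rc: "rainbow_circuit_free E (indepset E r) (PF \<union> Q)" by (rule rcf_comb[OF rs FE PF(1) Q(1) PF(2) Q(3)])
    have c: "card (PF \<union> Q) = r E" using cardU[OF PF(1) Q(1)] PF(3) Q(2) rhoC rFE by simp
    have ns: "\<not> stdR E r (PF \<union> Q)"
    proof
      assume "stdR E r (PF \<union> Q)"
      then obtain S where S: "bij_betw S {1..r E} (PF \<union> Q)"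
        "\<forall>i\<in>{1..r E}. cutR (\<Union>(S ` {1..i})) r (S i)" unfolding stdR_def by blast
      interpret stdctx E r "PF \<union> Q" S "r E" by (unfold_locales) (use rs p S in auto)
      have "stdR F r PF" by (rule transfer1[OF FE PF(1) Q(1) refl PF(3)])
      then show False using PF(4) by simp
    qed
    show ?thesis using p rc c ns by blast
  next
    assume "has_nonstandard_rp_rcf_coloring (E - F) (contr_indep E I F)"
    then obtain Q where Q: "partition_on (E - F) Q" "rainbow_circuit_free (E - F) (indepset (E - F) (crank r F)) Q"
      "card Q = crank r F (E - F)" "\<not> stdR (E - F) (crank r F) Q" unfolding IC hn_iff[OF rsC] by blast
    obtain PF where PF: "partition_on F PF" "card PF = r F" "rainbow_circuit_free F (indepset F r) PF"
      using rs_exists_col[OF rsF llF] by blast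
    have p: "partition_on E (PF \<union> Q)" using part_union(1)[OF PF(1) Q(1) FE] .
    have rc: "rainbow_circuit_free E (indepset E r) (PF \<union> Q)" by (rule rcf_comb[OF rs FE PF(1) Q(1) PF(3) Q(2)])
    have c: "card (PF \<union> Q) = r E" using cardU[OF PF(1) Q(1)] PF(2) Q(3) rhoC rFE by simp
    have cQ: "card Q = r E - r F" using Q(3) rhoC by simp
    have ns: "\<not> stdR E r (PF \<union> Q)"
    proof
      assume "stdR E r (PF \<union> Q)"
      then obtain S where S: "bij_betw S {1..r E} (PF \<union> Q)"
        "\<forall>i\<in>{1..r E}. cutR (\<Union>(S ` {1..i})) r (S i)" unfolding stdR_def by blast
      interpret stdctx E r "PF \<union> Q" S "r E" by (unfold_locales) (use rs p S in auto)
      have "stdR (E - F) (crank r F) Q" by (rule transfer2[OF FE PF(1) Q(1) refl cQ])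
      then show False using Q(4) by simp
    qed
    show ?thesis using p rc c ns by blast
  qed
  show ?thesis unfolding IE hn_iff[OF rs] by (rule goal)
qed

end
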